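(* Let $s\in\Sigma^*$ be non-empty with run-length encoding $s=a_1^{m_1}\cdots a_r^{m_r}$, let $h=\lceil r/2\rceil$, and let $\mathcal{K}(s)$ be the symbol string of the last token of $\mathcal{F}(s)$. Then $\mathcal{K}(s)=a_h^{m_h}$ if $r$ is odd and $\mathcal{K}(s)=a_h^{m_h}a_{h+1}^{m_{h+1}}$ if $r$ is even. In either case $\mathcal{K}(s)$ contains at most two distinct symbols.
   Context: Let $\Sigma$ be an alphabet and $\texttt{@},\texttt{\$}$ two distinct symbols not in $\Sigma$. The run-length encoding of a non-empty string $s$ is the unique decomposition $s=a_1^{m_1}\cdots a_r^{m_r}$ with $a_i\in\Sigma$, $m_i\ge1$, $a_i\ne a_{i+1}$ ($a^m$ is $a$ repeated $m$ times). For $s$ with $|s|=n$ let $\hat s=\texttt{@}\,s\,\texttt{\$}$ (positions $1,\dots,n+2$); $\hat s[i..j)$ is the substring at positions $i,\dots,j-1$. The leading (trailing) run of a non-empty string is its longest prefix (suffix) consisting of one repeated symbol. The Flashback decomposition $\mathcal{F}(s)$ is the sequence of tokens $(\sigma,p)$ (symbol string $\sigma$, split position $p$) produced as follows, starting from active span $[lo,hi)=[1,n+3)$: if $lo\ge hi$, stop. Let $\ell$ be the leading-run length of $\hat s[lo..hi)$. If $\ell=hi-lo$, append $(\hat s[lo..hi),0)$ and stop. Otherwise let $\hat s[r'..hi)$ be the trailing run of $\hat s[lo..hi)$ and $\sigma=\hat s[lo..lo+\ell)\cdot\hat s[r'..hi)$; if $lo+\ell\ge r'$, append $(\sigma,0)$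 and stop; otherwise append $(\sigma,\ell)$ and repeat with $[lo+\ell,r')$. The symbol string of the last token is called the peeling kernel $\mathcal{K}(s)$. *)

theory Defs
  imports Main
begin

text \<open>Symbols of the augmented string: letters of the alphabet (type 'a) plus the
two fresh sentinels @ and $.\<close>
datatype 'a hsym = Sym 'a | At | Dollar

text \<open>hat s = @ s $, positions 1..n+2 (position i is list index i-1).\<close>
definition hat :: "'a list \<Rightarrow> 'a hsym list" where
  "hat s = At # map Sym s @ [Dollar]"

text \<open>Substring at positions i,...,j-1 (1-indexed).\<close>
definition sub :: "'b list \<Rightarrow> nat \<Rightarrow> nat \<Rightarrow> 'b list" where
  "sub w i j = map (\<lambda>k. w ! (k - 1)) [i..<j]"

definition lead_len :: "'b list \<Rightarrow> nat" where
  "lead_len u = length (takeWhile (\<lambda>x. x = hd u) u)"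

definition trail_len :: "'b list \<Rightarrow> nat" where
  "trail_len u = length (takeWhile (\<lambda>x. x = last u) (rev u))"

lemma lead_len_pos: "u \<noteq> [] \<Longrightarrow> 0 < lead_len u"
  by (cases u) (auto simp: lead_len_def)

lemma trail_len_pos: "u \<noteq> [] \<Longrightarrow> 0 < trail_len u"
  by (cases "rev u") (auto simp: trail_len_def last_rev[symmetric] simp del: last_rev)

function flash :: "'b list \<Rightarrow> nat \<Rightarrow> nat \<Rightarrow> ('b list \<times> nat) list" where
  "flash w lo hi =
    (if hi \<le> lo then []
     else let u = sub w lo hi; l = lead_len u in
       if l = hi - lo then [(u, 0)]
       else let r' = hi - trail_len u;
                \<sigma> = sub w lo (lo + l) @ sub w r' hi in
         if lo + l \<ge> r' then [(\<sigma>, 0)]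
         else (\<sigma>, l) # flash w (lo + l) r')"
  by pat_completeness auto
lemma flash_term_aux:
  "\<not> hi \<le> lo \<Longrightarrow> hi - (trail_len (sub w lo hi) + (lo + lead_len (sub w lo hi))) < hi - lo"
proof -
  assume a: "\<not> hi \<le> lo"
  then have "sub w lo hi \<noteq> []" by (simp add: sub_def)
  from lead_len_pos[OF this] show ?thesis using a by linarith
qed

termination
  by (relation "measure (\<lambda>(w, lo, hi). hi - lo)") (auto dest: flash_term_aux)

definition flashback :: "'a list \<Rightarrow> ('a hsym list \<times> nat) list" where
  "flashback s = flash (hat s) 1 (length s + 3)"

definition kernel :: "'a list \<Rightarrow> 'a hsym list" where
  "kernel s = fst (last (flashback s))"

definition is_rle :: "'a list \<Rightarrow> 'a list \<Rightarrow> nat list \<Rightarrow> bool" where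
  "is_rle s as ms \<longleftrightarrow> length as = length ms \<and> (\<forall>i<length ms. 1 \<le> ms ! i)
     \<and> (\<forall>i. i + 1 < length as \<longrightarrow> as ! i \<noteq> as ! (i + 1))
     \<and> s = concat (map (\<lambda>(a, m). replicate m a) (zip as ms))"

end

theory Submission
  imports Defs
begin

definition expand :: "('b \<times> nat) list \<Rightarrow> 'b list" where
  "expand ps = concat (map (\<lambda>(a, m). replicate m a) ps)"

definition vr :: "('b \<times> nat) list \<Rightarrow> bool" where
  "vr ps \<longleftrightarrow> (\<forall>p\<in>set ps. 0 < snd p) \<and> successively (\<lambda>p q. fst p \<noteq> fst q) ps"

definition middle :: "'c list \<Rightarrow> 'c list" where
  "middle ps = take (2 - length ps mod 2) (drop ((length ps - 1) div 2) ps)"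

lemma expand_simps[simp]:
  "expand [] = []" "expand (p # ps) = replicate (snd p) (fst p) @ expand ps"
  "expand (ps @ qs) = expand ps @ expand qs"
  by (auto simp: expand_def split: prod.splits)

lemma expand_rev: "expand (rev ps) = rev (expand ps)"
  by (induction ps) auto

lemma vr_rev: "vr (rev ps) = vr ps"
  unfolding vr_def by (auto elim: successively_mono)

lemma vr_ConsD: "vr (p # ps) \<Longrightarrow> vr ps"
  by (auto simp: vr_def successively_Cons)

lemma vr_appD: "vr (ps @ qs) \<Longrightarrow> vr ps"
  by (auto simp: vr_def successively_append_iff)

lemma length_sub[simp]: "length (sub w i j) = j - i"
  by (simp add: sub_def)

lemma sub_split: "i \<le> k \<Longrightarrow> k \<le> j \<Longrightarrow> sub w i j = sub w i k @ sub w k j"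
  unfolding sub_def by (metis map_append upt_add_eq_append le_add_diff_inverse)

lemma lead_len_expand:
  assumes "vr (p # ps)"
  shows "lead_len (expand (p # ps)) = snd p"
proof -
  have pos: "0 < snd p" using assms by (simp add: vr_def)
  have hd: "hd (expand (p # ps)) = fst p" using pos by (cases "snd p") auto
  have tw: "takeWhile (\<lambda>x. x = fst p) (expand ps) = []"
  proof (cases ps)
    case Nil then show ?thesis by simp
  next
    case (Cons q qs)
    then have "0 < snd q" "fst p \<noteq> fst q" using assms by (auto simp: vr_def)
    then show ?thesis using Cons by (cases "snd q") auto
  qed
  show ?thesis unfolding lead_len_def hd using tw
    by (subst expand_simps(2), subst takeWhile_append2) auto
qed

lemma trail_len_lead: "u \<noteq> [] \<Longrightarrow> trail_len u = lead_len (rev u)"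
  by (simp add: trail_len_def lead_len_def hd_rev)

lemma trail_len_expand:
  assumes "vr (ps @ [q])"
  shows "trail_len (expand (ps @ [q])) = snd q"
proof -
  have "0 < snd q" using assms by (simp add: vr_def)
  then have ne: "expand (ps @ [q]) \<noteq> []" by simp
  have "vr (q # rev ps)" using assms vr_rev[of "ps @ [q]"] by simp
  from lead_len_expand[OF this] show ?thesis
    using trail_len_lead[OF ne] by (simp add: expand_rev[symmetric])
qed

lemma middle_shift:
  assumes "qs \<noteq> []"
  shows "middle (p # qs @ [q]) = middle qs"
proof -
  obtain m where m: "length qs = Suc m" using assms by (cases qs) auto
  have d: "(length (p # qs @ [q]) - 1) div 2 = Suc (m div 2)" using m by simp
  have t: "2 - length (p # qs @ [q]) mod 2 = 2 - length qs mod 2" using m by simp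
  have "take (2 - length qs mod 2) (drop (m div 2) (qs @ [q])) =
        take (2 - length qs mod 2) (drop (m div 2) qs)"
    using m by (simp add: drop_append take_append; presburger)
  then show ?thesis unfolding middle_def d t using m by simp
qed

lemma expand_ne: "vr ps \<Longrightarrow> ps \<noteq> [] \<Longrightarrow> expand ps \<noteq> []"
  by (cases ps) (auto simp: vr_def)

lemma length_expand_ge: "length (expand ps) \<ge> 0"
  by simp

lemma flash_last:
  "vr ps \<Longrightarrow> ps \<noteq> [] \<Longrightarrow> sub w lo hi = expand ps \<Longrightarrow>
   flash w lo hi \<noteq> [] \<and> fst (last (flash w lo hi)) = expand (middle ps)"
proof (induction "length ps" arbitrary: ps lo hi rule: less_induct)
  case less
  have lt: "lo < hi" using expand_ne[OF less.prems(1,2)] less.prems(3)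
    by (metis length_sub length_0_conv zero_less_diff neq0_conv)
  obtain p ps' where ps: "ps = p # ps'" using less.prems(2) by (cases ps) auto
  show ?case
  proof (cases "ps' = []")
    case True
    have "lead_len (sub w lo hi) = snd p" using less.prems(1,3) ps True
      using lead_len_expand[of p "[]"] by simp
    moreover have "length (sub w lo hi) = snd p" using less.prems(3) ps True by simp
    ultimately have "lead_len (sub w lo hi) = hi - lo" by simp
    then have "flash w lo hi = [(sub w lo hi, 0)]" using lt by (subst flash.simps) simp
    then show ?thesis using less.prems(3) ps True by (simp add: middle_def)
  next
    case False
    then obtain qs q where ps': "ps' = qs @ [q]" by (cases ps' rule: rev_exhaust) auto
    have vr: "vr (p # qs @ [q])" using less.prems(1) ps ps' by simp
    have pq: "0 < snd p" "0 < snd q" using vr by (auto simp: vr_def)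
    have u: "sub w lo hi = expand (p # qs @ [q])" using less.prems(3) ps ps' by simp
    have len: "hi - lo = snd p + length (expand qs) + snd q"
      using arg_cong[OF u, of length] by simp
    have ll: "lead_len (sub w lo hi) = snd p" using u lead_len_expand[OF vr] by simp
    have tl: "trail_len (sub w lo hi) = snd q" using u trail_len_expand[of "p # qs" q] vr by simp
    have split: "sub w lo hi = sub w lo (lo + snd p) @ sub w (lo + snd p) (hi - snd q) @ sub w (hi - snd q) hi"
    proof -
      have a: "lo + snd p \<le> hi - snd q" "lo \<le> lo + snd p" "hi - snd q \<le> hi" using len lt by auto
      have "sub w lo hi = sub w lo (lo + snd p) @ sub w (lo + snd p) hi"
        using a by (intro sub_split) auto
      moreover have "sub w (lo + snd p) hi = sub w (lo + snd p) (hi - snd q) @ sub w (hi - snd q) hi"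
        using a by (intro sub_split) auto
      ultimately show ?thesis by simp
    qed
    have e: "sub w lo hi = replicate (snd p) (fst p) @ expand qs @ replicate (snd q) (fst q)"
      using u by simp
    have s1: "sub w lo (lo + snd p) = replicate (snd p) (fst p)"
      and s23: "sub w (lo + snd p) (hi - snd q) @ sub w (hi - snd q) hi = expand qs @ replicate (snd q) (fst q)"
      using split e append_eq_append_conv[of "sub w lo (lo + snd p)" "replicate (snd p) (fst p)"] by auto
    have s2: "sub w (lo + snd p) (hi - snd q) = expand qs"
      and s3: "sub w (hi - snd q) hi = replicate (snd q) (fst q)"
      using s23 append_eq_append_conv[of "sub w (lo + snd p) (hi - snd q)" "expand qs"] len by auto
    have neq: "lead_len (sub w lo hi) \<noteq> hi - lo" using ll len pq by simp
    show ?thesis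
    proof (cases "qs = []")
      case True
      have "flash w lo hi = [(sub w lo (lo + snd p) @ sub w (hi - snd q) hi, 0)]"
        using lt neq ll tl len True by (subst flash.simps) (auto simp: Let_def)
      then show ?thesis using s1 s3 ps ps' True by (simp add: middle_def)
    next
      case False
      have vq: "vr qs" using vr vr_ConsD vr_appD by blast
      have fl: "flash w lo hi = (sub w lo (lo + snd p) @ sub w (hi - snd q) hi, snd p) # flash w (lo + snd p) (hi - snd q)"
      proof -
        have "length (expand qs) > 0" using expand_ne[OF vq False] by simp
        then have "lo + snd p < hi - snd q" using len by linarith
        then show ?thesis using lt neq ll tl by (subst flash.simps) (auto simp: Let_def)
      qed
      have IH: "flash w (lo + snd p) (hi - snd q) \<noteq> [] \<and> fst (last (flash w (lo + snd p) (hi - snd q))) = expand (middle qs)"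
        using less.hyps[of qs] ps ps' vq False s2 by simp
      show ?thesis using fl IH ps ps' middle_shift[OF False] by simp
    qed
  qed
qed

lemma sub_all: "sub w 1 (Suc (length w)) = w"
proof -
  have "[1..<Suc (length w)] = map Suc [0..<length w]" by (simp add: map_Suc_upt)
  then show ?thesis by (simp add: sub_def map_nth comp_def)
qed

lemma expand_map: "expand (map (\<lambda>(a, m). (g a, m)) xs) = map g (concat (map (\<lambda>(a, m). replicate m a) xs))"
  by (induction xs) auto

lemma take1_drop: "d < length xs \<Longrightarrow> take 1 (drop d xs) = [xs ! d]"
  by (simp add: Cons_nth_drop_Suc[symmetric])

lemma take2_drop: "Suc d < length xs \<Longrightarrow> take 2 (drop d xs) = [xs ! d, xs ! Suc d]"
  by (simp add: Cons_nth_drop_Suc[symmetric] numeral_2_eq_2)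

lemma middle_map: "middle (map f xs) = map f (middle xs)"
  by (simp add: middle_def take_map drop_map)

theorem corollary6p7:
  fixes s as :: "'a list" and ms :: "nat list"
  assumes "s \<noteq> []"
    and "is_rle s as ms"
  defines "r \<equiv> length as"
  defines "h \<equiv> (r + 1) div 2"
  shows "(odd r \<longrightarrow> kernel s = replicate (ms ! (h - 1)) (Sym (as ! (h - 1))))
       \<and> (even r \<longrightarrow> kernel s = replicate (ms ! (h - 1)) (Sym (as ! (h - 1)))
                              @ replicate (ms ! h) (Sym (as ! h)))
       \<and> card (set (kernel s)) \<le> 2"
proof -
  define xs where "xs = zip as ms"
  define f :: "'a \<times> nat \<Rightarrow> 'a hsym \<times> nat" where "f = (\<lambda>(a, m). (Sym a, m))"
  define ps where "ps = (At, 1) # map f xs @ [(Dollar, 1)]"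
  have lens: "length as = length ms" and pos: "\<forall>i<length ms. 1 \<le> ms ! i"
    and dist: "\<forall>i. i + 1 < length as \<longrightarrow> as ! i \<noteq> as ! (i + 1)"
    and sdef: "s = concat (map (\<lambda>(a, m). replicate m a) xs)"
    using assms(2) by (auto simp: is_rle_def xs_def)
  have lx: "length xs = r" using lens by (simp add: xs_def r_def)
  have xne: "xs \<noteq> []" using assms(1) sdef by auto
  have mne: "map f xs \<noteq> []" using xne by simp
  have ex: "expand ps = hat s"
    using expand_map[of Sym xs] by (simp add: ps_def hat_def sdef f_def)
  have sb: "sub (hat s) 1 (length s + 3) = expand ps"
    using sub_all[of "hat s"] ex by (simp add: hat_def numeral_3_eq_3)
  have vpos: "\<forall>p\<in>set ps. 0 < snd p"
    using pos lens by (auto simp: ps_def f_def xs_def set_zip)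
  have vmid: "successively (\<lambda>p q. fst p \<noteq> fst q) (map f xs)"
    unfolding successively_conv_nth using dist lens
    by (auto simp: f_def xs_def split: prod.splits)
  have "successively (\<lambda>p q. fst p \<noteq> fst q) ps"
    using vmid mne unfolding ps_def
    by (auto simp: successively_append_iff successively_Cons f_def neq_Nil_conv hd_map last_map
        split: prod.splits)
  then have vr: "vr ps" using vpos by (simp add: vr_def)
  have k: "kernel s = expand (map f (middle xs))"
    using flash_last[OF vr _ sb] middle_shift[OF mne] middle_map[of f xs]
    by (simp add: kernel_def flashback_def ps_def)
  have r0: "r > 0" using lx xne by (metis length_greater_0_conv)
  have A: "odd r \<longrightarrow> kernel s = replicate (ms ! (h - 1)) (Sym (as ! (h - 1)))"
  proof
    assume o: "odd r"
    have d: "h - 1 = (r - 1) div 2" "h - 1 < r" using o r0 unfolding h_def by presburger+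
    have "middle xs = [xs ! (h - 1)]" using o d lx take1_drop[of "h - 1" xs]
      by (simp add: middle_def odd_iff_mod_2_eq_one)
    then show "kernel s = replicate (ms ! (h - 1)) (Sym (as ! (h - 1)))"
      using k d lens by (simp add: xs_def f_def r_def)
  qed
  have B: "even r \<longrightarrow> kernel s = replicate (ms ! (h - 1)) (Sym (as ! (h - 1)))
                              @ replicate (ms ! h) (Sym (as ! h))"
  proof
    assume e: "even r"
    have d: "h - 1 = (r - 1) div 2" "Suc (h - 1) < r" "Suc (h - 1) = h" using e r0 unfolding h_def by presburger+
    have "middle xs = [xs ! (h - 1), xs ! h]" using e d lx take2_drop[of "h - 1" xs]
      by (simp add: middle_def)
    then show "kernel s = replicate (ms ! (h - 1)) (Sym (as ! (h - 1))) @ replicate (ms ! h) (Sym (as ! h))"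
      using k d lens by (simp add: xs_def f_def r_def)
  qed
  have C: "card (set (kernel s)) \<le> 2"
  proof (cases "odd r")
    case True
    have "set (kernel s) \<subseteq> {Sym (as ! (h - 1))}" using A True by auto
    then have "card (set (kernel s)) \<le> card {Sym (as ! (h - 1))}"
      by (intro card_mono) auto
    then show ?thesis by simp
  next
    case False
    have "set (kernel s) \<subseteq> {Sym (as ! (h - 1)), Sym (as ! h)}" using B False by auto
    then have "card (set (kernel s)) \<le> card {Sym (as ! (h - 1)), Sym (as ! h)}"
      by (intro card_mono) auto
    also have "\<dots> \<le> 2" by (simp add: card_insert_if)
    finally show ?thesis .
  qed
  show ?thesis using A B C by blast
qed

end
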